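(* Let $h_m:[a,b]\to[c_m,d_m]$ ($m\in\mathcal M\subset\mathbb N$) be continuous increasing functions such that $\sum_{m\in\mathcal M}h_m(x)<\infty$ for all $x\in[a,b]$. Let $K\subset[a,b]$ be closed with $\lambda(h_m(K))=0$ for all $m\in\mathcal M$. Then $h(x):=\sum_{m\in\mathcal M}h_m(x)$ defines a continuous increasing function $h:[a,b]\to[c,d]$ (for some $c,d\in\mathbb R$) with $\lambda(h(K))=0$.
   Context: $\lambda$ denotes Lebesgue measure on $\mathbb R$. *)

theory Defs
  imports "HOL-Analysis.Analysis"
begin

end

theory Submission
  imports Defs "HOL-Analysis.Analysis"
begin
lemma single_measure:
  fixes f :: "real \<Rightarrow> real" and a b :: real
  assumes ab: "a \<le> b" and cf: "continuous_on {a..b} f" and sf: "strict_mono_on {a..b} f"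
  obtains \<nu> where "sets \<nu> = sets borel"
    "\<And>A. A \<in> sets borel \<Longrightarrow> A \<subseteq> {a..b} \<Longrightarrow> emeasure \<nu> A = emeasure lborel (f ` A)"
    "\<And>x y. x \<le> y \<Longrightarrow> emeasure \<nu> {x<..y} = ennreal (f (max a (min b y)) - f (max a (min b x)))"
    "emeasure \<nu> UNIV \<noteq> \<infinity>"
proof -
  define S where "S = {a..b}"
  define J where "J = {f a..f b}"
  define g where "g = the_inv_into S f"
  define c where "c = (\<lambda>x::real. max a (min b x))"
  have inj: "inj_on f S" using sf strict_mono_on_imp_inj_on S_def by blast
  have mono: "\<And>x y. x \<in> S \<Longrightarrow> y \<in> S \<Longrightarrow> f x \<le> f y \<longleftrightarrow> x \<le> y"
    using sf strict_mono_on_less_eq S_def by blast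
  have fS: "f ` S = J"
  proof
    show "f ` S \<subseteq> J" using mono ab by (auto simp: S_def J_def)
    show "J \<subseteq> f ` S"
    proof
      fix y assume "y \<in> J"
      then obtain x where "x \<ge> a" "x \<le> b" "f x = y"
        using IVT'[of f a y b] ab cf by (auto simp: J_def)
      then show "y \<in> f ` S" by (auto simp: S_def)
    qed
  qed
  have gc: "continuous_on J g"
    using continuous_on_inv_into[OF cf[folded S_def] _ inj] fS by (simp add: S_def g_def)
  have gS: "\<And>t. t \<in> J \<Longrightarrow> g t \<in> S" using the_inv_into_into[OF inj] fS g_def by blast
  have fg: "\<And>t. t \<in> J \<Longrightarrow> f (g t) = t" using f_the_inv_into_f[OF inj] fS g_def by blast
  have gf: "\<And>x. x \<in> S \<Longrightarrow> g (f x) = x" using the_inv_into_f_f[OF inj] g_def by blast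
  have Jsets: "J \<in> sets lborel" by (simp add: J_def)
  let ?N = "restrict_space lborel J"
  have gm: "g \<in> measurable ?N borel"
  proof -
    have "g \<in> borel_measurable (restrict_space borel J)"
      by (rule borel_measurable_continuous_on_restrict[OF gc])
    then show ?thesis
      by (simp add: measurable_def sets_restrict_space space_restrict_space)
  qed
  define \<nu> where "\<nu> = distr ?N borel g"
  have spN: "space ?N = J" by (simp add: space_restrict_space)
  have em: "emeasure \<nu> A = emeasure lborel (g -` A \<inter> J)" and ms: "g -` A \<inter> J \<in> sets lborel"
    if "A \<in> sets borel" for A
  proof -
    have "g -` A \<inter> space ?N \<in> sets ?N" using measurable_sets[OF gm that] .
    then show "g -` A \<inter> J \<in> sets lborel"
      using sets_restrict_space_iff[of J lborel] Jsets spN by auto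
    show "emeasure \<nu> A = emeasure lborel (g -` A \<inter> J)"
      unfolding \<nu>_def using emeasure_distr[OF gm that] spN
      using emeasure_restrict_space[of J lborel "g -` A \<inter> J"] Jsets by simp
  qed
  have img: "g -` A \<inter> J = f ` A" if "A \<subseteq> S" for A
  proof
    show "g -` A \<inter> J \<subseteq> f ` A"
    proof
      fix t assume "t \<in> g -` A \<inter> J"
      then show "t \<in> f ` A" using fg[of t] by (metis IntD1 IntD2 image_eqI vimageE)
    qed
    show "f ` A \<subseteq> g -` A \<inter> J"
      using that gf fS by auto
  qed
  have ioc: "emeasure \<nu> {x<..y} = ennreal (f (c y) - f (c x))" if xy: "x \<le> y" for x y
  proof -
    have cS: "c x \<in> S" "c y \<in> S" using ab by (auto simp: c_def S_def)
    have cxy: "c x \<le> c y" using xy by (auto simp: c_def)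
    have aS: "a \<in> S" "b \<in> S" using ab by (auto simp: S_def)
    let ?P = "g -` {x<..y} \<inter> J"
    have P1: "{f (c x)<..f (c y)} \<subseteq> ?P"
    proof
      fix t assume t: "t \<in> {f (c x)<..f (c y)}"
      have "f a \<le> f (c x)" "f (c y) \<le> f b" using mono cS aS by (auto simp: c_def S_def)
      then have tJ: "t \<in> J" using t by (auto simp: J_def)
      define u where "u = g t"
      have uS: "u \<in> S" and fu: "f u = t" using gS fg tJ u_def by auto
      have "c x < u" using t fu uS cS sf strict_mono_on_less S_def by (metis greaterThanAtMost_iff)
      moreover have "u \<le> c y" using t fu uS cS mono by auto
      ultimately have "x < u" "u \<le> y" using uS by (auto simp: c_def S_def)
      then show "t \<in> ?P" using tJ u_def by auto
    qed
    have P2: "?P \<subseteq> {f (c x)..f (c y)}"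
    proof
      fix t assume t: "t \<in> ?P"
      then have tJ: "t \<in> J" and u: "x < g t" "g t \<le> y" by auto
      have uS: "g t \<in> S" using gS tJ by auto
      have "c x \<le> g t" "g t \<le> c y" using u uS by (auto simp: c_def S_def)
      then have "f (c x) \<le> f (g t)" "f (g t) \<le> f (c y)" using mono uS cS by auto
      then show "t \<in> {f (c x)..f (c y)}" using fg tJ by auto
    qed
    have fcxy: "f (c x) \<le> f (c y)" using mono cS cxy by auto
    have Pm: "?P \<in> sets lborel" using ms by simp
    have "emeasure lborel ?P = ennreal (f (c y) - f (c x))"
    proof (rule antisym)
      show "emeasure lborel ?P \<le> ennreal (f (c y) - f (c x))"
        using emeasure_mono[OF P2, of lborel] fcxy by (simp add: emeasure_lborel_Icc)
      show "ennreal (f (c y) - f (c x)) \<le> emeasure lborel ?P"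
        using emeasure_mono[OF P1 Pm] fcxy by (simp add: emeasure_lborel_Ioc)
    qed
    then show ?thesis using em by simp
  qed
  show ?thesis
  proof
    show "sets \<nu> = sets borel" by (simp add: \<nu>_def)
    show "emeasure \<nu> A = emeasure lborel (f ` A)" if "A \<in> sets borel" "A \<subseteq> {a..b}" for A
      using em[OF that(1)] img that(2) S_def by simp
    show "emeasure \<nu> {x<..y} = ennreal (f (max a (min b y)) - f (max a (min b x)))" if "x \<le> y" for x y
      using ioc[OF that] by (simp add: c_def)
    have "emeasure \<nu> UNIV = emeasure lborel J" using em[of UNIV] by simp
    then show "emeasure \<nu> UNIV \<noteq> \<infinity>" by (simp add: J_def emeasure_lborel_Icc_eq)
  qed
qed

lemma sum_measure:
  fixes N :: "nat \<Rightarrow> real measure"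
  assumes sN: "\<And>m. sets (N m) = sets borel"
  obtains S where "sets S = sets borel"
    "\<And>A. A \<in> sets borel \<Longrightarrow> emeasure S A = (\<Sum>m. emeasure (N m) A)"
proof -
  define \<mu> where "\<mu> = (\<lambda>A. \<Sum>m. emeasure (N m) A)"
  define S where "S = measure_of UNIV (sets borel) \<mu>"
  have sa: "sigma_algebra UNIV (sets borel)"
    using sets.sigma_algebra_axioms[of borel] by simp
  have pos: "positive (sets borel) \<mu>" by (simp add: positive_def \<mu>_def)
  have ca: "countably_additive (sets borel) \<mu>"
    unfolding countably_additive_def
  proof (intro allI impI)
    fix A :: "nat \<Rightarrow> real set"
    assume A: "range A \<subseteq> sets borel" "disjoint_family A" "\<Union> (range A) \<in> sets borel"
    have "(\<Sum>i. \<mu> (A i)) = (\<Sum>i. \<Sum>m. emeasure (N m) (A i))" by (simp add: \<mu>_def)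
    also have "\<dots> = (\<integral>\<^sup>+ i. (\<Sum>m. emeasure (N m) (A i)) \<partial>count_space UNIV)"
      by (simp add: nn_integral_count_space_nat)
    also have "\<dots> = (\<Sum>m. \<integral>\<^sup>+ i. emeasure (N m) (A i) \<partial>count_space UNIV)"
      by (rule nn_integral_suminf) simp
    also have "\<dots> = (\<Sum>m. \<Sum>i. emeasure (N m) (A i))"
      by (simp add: nn_integral_count_space_nat)
    also have "\<dots> = (\<Sum>m. emeasure (N m) (\<Union>i. A i))"
      using A sN by (subst suminf_emeasure) auto
    finally show "(\<Sum>i. \<mu> (A i)) = \<mu> (\<Union> (range A))" by (simp add: \<mu>_def)
  qed
  show ?thesis
  proof
    show "sets S = sets borel" unfolding S_def
      using sets.sigma_sets_eq[of borel] by (simp add: sets_measure_of)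
    show "emeasure S A = (\<Sum>m. emeasure (N m) A)" if "A \<in> sets borel" for A
      unfolding S_def using emeasure_measure_of_sigma[OF sa pos ca that] by (simp add: \<mu>_def)
  qed
qed

theorem lemma3p3:
  fixes hm :: "nat \<Rightarrow> real \<Rightarrow> real"
    and M :: "nat set"
    and a b :: real
    and cm dm :: "nat \<Rightarrow> real"
    and K :: "real set"
  assumes Mne: "M \<noteq> {}"
    and cont: "\<And>m. m \<in> M \<Longrightarrow> continuous_on {a..b} (hm m)"
    and incr: "\<And>m. m \<in> M \<Longrightarrow> strict_mono_on {a..b} (hm m)"
    and range: "\<And>m. m \<in> M \<Longrightarrow> hm m ` {a..b} \<subseteq> {cm m..dm m}"
    and summ: "\<And>x. x \<in> {a..b} \<Longrightarrow> summable (\<lambda>m. if m \<in> M then hm m x else 0)"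
    and Kclosed: "closed K"
    and Ksub: "K \<subseteq> {a..b}"
    and null: "\<And>m. m \<in> M \<Longrightarrow> hm m ` K \<in> null_sets lebesgue"
  shows "continuous_on {a..b} (\<lambda>x. \<Sum>m. if m \<in> M then hm m x else 0)
    \<and> strict_mono_on {a..b} (\<lambda>x. \<Sum>m. if m \<in> M then hm m x else 0)
    \<and> (\<exists>c d. (\<lambda>x. \<Sum>m. if m \<in> M then hm m x else 0) ` {a..b} \<subseteq> {c..d})
    \<and> (\<lambda>x. \<Sum>m. if m \<in> M then hm m x else 0) ` K \<in> null_sets lebesgue"
proof (cases "a \<le> b")
  case False
  then have "{a..b} = {}" by simp
  moreover have "K = {}" using Ksub False by auto
  ultimately show ?thesis by simp
next
  case ab: True
  define F where "F = (\<lambda>m x. if m \<in> M then hm m x else 0)"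
  define H where "H = (\<lambda>x. \<Sum>m. F m x)"
  have Fmono: "F m x \<le> F m y" if "x \<in> {a..b}" "y \<in> {a..b}" "x \<le> y" for m x y
    using that incr[THEN strict_mono_on_leD, of m x y] by (auto simp: F_def)
  have sF: "summable (\<lambda>m. F m x)" if "x \<in> {a..b}" for x using summ[OF that] by (simp add: F_def)
  have aI: "a \<in> {a..b}" and bI: "b \<in> {a..b}" using ab by auto
  define D where "D = (\<lambda>m x. F m x - F m a)"
  have Hc: "continuous_on {a..b} H"
  proof -
    have ul: "uniform_limit {a..b} (\<lambda>n x. \<Sum>i<n. D i x) (\<lambda>x. \<Sum>i. D i x) sequentially"
    proof (rule Weierstrass_m_test)
      show "norm (D n x) \<le> D n b" if "x \<in> {a..b}" for n x
        using Fmono[OF aI that] Fmono[OF that bI] that by (auto simp: D_def)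
      show "summable (\<lambda>n. D n b)" unfolding D_def using sF[OF bI] sF[OF aI] by (rule summable_diff)
    qed
    have cD: "continuous_on {a..b} (D i)" for i
      using cont[of i] by (cases "i \<in> M") (auto simp: D_def F_def intro!: continuous_intros)
    have "continuous_on {a..b} (\<lambda>x. \<Sum>i. D i x)"
      by (rule uniform_limit_theorem[OF _ ul]) (auto intro!: always_eventually continuous_on_sum cD)
    then have c2: "continuous_on {a..b} (\<lambda>x. (\<Sum>i. F i a) + (\<Sum>i. D i x))"
      by (intro continuous_intros)
    have "H x = (\<Sum>i. F i a) + (\<Sum>i. D i x)" if "x \<in> {a..b}" for x
      unfolding D_def H_def using suminf_diff[OF sF[OF that] sF[OF aI]] by simp
    then show ?thesis using continuous_on_cong c2 by (metis (no_types, lifting))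
  qed
  obtain m0 where m0: "m0 \<in> M" using Mne by auto
  have Hs: "strict_mono_on {a..b} H"
  proof (rule strict_mono_onI)
    fix x y assume xy: "x \<in> {a..b}" "y \<in> {a..b}" "x < y"
    have "0 < (\<Sum>m. F m y - F m x)"
    proof (rule suminf_pos2)
      show "summable (\<lambda>m. F m y - F m x)" using sF xy by (intro summable_diff) auto
      show "0 \<le> F m y - F m x" for m using Fmono xy by auto
      show "0 < F m0 y - F m0 x" using incr[OF m0] xy m0 by (auto simp: F_def strict_mono_on_def)
    qed
    also have "\<dots> = H y - H x" unfolding H_def using suminf_diff[OF sF sF] xy by simp
    finally show "H x < H y" by simp
  qed
  have Hb: "\<exists>c d. H ` {a..b} \<subseteq> {c..d}"
  proof -
    have "H ` {a..b} \<subseteq> {H a..H b}"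
    proof
    fix t assume "t \<in> H ` {a..b}"
    then obtain x where x: "x \<in> {a..b}" "t = H x" by auto
    then have "H a \<le> H x" "H x \<le> H b"
      using strict_mono_on_leD[OF Hs aI x(1)] strict_mono_on_leD[OF Hs x(1) bI] by auto
    then show "t \<in> {H a..H b}" using x by auto
    qed
    then show ?thesis by blast
  qed
  define P where "P = (\<lambda>m \<nu>. sets \<nu> = sets borel \<and>
    (\<forall>A. A \<in> sets borel \<longrightarrow> A \<subseteq> {a..b} \<longrightarrow> emeasure \<nu> A = emeasure lborel (hm m ` A)) \<and>
    (\<forall>x y. x \<le> y \<longrightarrow> emeasure \<nu> {x<..y} = ennreal (hm m (max a (min b y)) - hm m (max a (min b x)))))"
  have "\<forall>m\<in>M. \<exists>\<nu>. P m \<nu>"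
  proof
    fix m assume m: "m \<in> M"
    show "\<exists>\<nu>. P m \<nu>"
      apply (rule single_measure[OF ab cont[OF m] incr[OF m]])
      unfolding P_def by blast
  qed
  then obtain \<nu> where \<nu>: "\<And>m. m \<in> M \<Longrightarrow> P m (\<nu> m)" using bchoice[of M "\<lambda>m v. P m v"] by blast
  define N where "N = (\<lambda>m. if m \<in> M then \<nu> m else null_measure borel)"
  have sN: "sets (N m) = sets borel" for m
    using \<nu>[of m] by (auto simp: N_def P_def)
  obtain S where S: "sets S = sets borel" "\<And>A. A \<in> sets borel \<Longrightarrow> emeasure S A = (\<Sum>m. emeasure (N m) A)"
    using sum_measure[of N, OF sN] by blast
  obtain \<mu> where \<mu>1: "sets \<mu> = sets borel"
    and \<mu>2: "\<And>A. A \<in> sets borel \<Longrightarrow> A \<subseteq> {a..b} \<Longrightarrow> emeasure \<mu> A = emeasure lborel (H ` A)"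
    and \<mu>3: "\<And>x y. x \<le> y \<Longrightarrow> emeasure \<mu> {x<..y} = ennreal (H (max a (min b y)) - H (max a (min b x)))"
    and \<mu>4: "emeasure \<mu> UNIV \<noteq> \<infinity>"
    using single_measure[OF ab Hc Hs] by blast
  have ioc: "emeasure \<mu> {x<..y} = emeasure S {x<..y}" for x y
  proof (cases "x \<le> y")
    case False
    then show ?thesis by simp
  next
    case True
    define cx where "cx = max a (min b x)"
    define cy where "cy = max a (min b y)"
    have cI: "cx \<in> {a..b}" "cy \<in> {a..b}" "cx \<le> cy" using ab True by (auto simp: cx_def cy_def)
    have "emeasure S {x<..y} = (\<Sum>m. emeasure (N m) {x<..y})" using S(2) by simp
    also have "\<dots> = (\<Sum>m. ennreal (F m cy - F m cx))"
    proof (rule suminf_cong)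
      fix m show "emeasure (N m) {x<..y} = ennreal (F m cy - F m cx)"
        using \<nu>[of m] True by (cases "m \<in> M") (auto simp: N_def P_def F_def cx_def cy_def)
    qed
    also have "\<dots> = ennreal (\<Sum>m. F m cy - F m cx)"
      using Fmono[OF cI(1) cI(2) cI(3)] sF cI
      by (intro suminf_ennreal2) (auto intro!: summable_diff)
    also have "(\<Sum>m. F m cy - F m cx) = H cy - H cx"
      unfolding H_def using suminf_diff[OF sF sF] cI by simp
    finally show ?thesis using \<mu>3[OF True] by (simp add: cx_def cy_def)
  qed
  have eqm: "\<mu> = S"
  proof (rule measure_eqI_generator_eq[where \<Omega>=UNIV and E="range (\<lambda>(x,y). {x<..y::real})"
        and A="\<lambda>i. {- real i<..real i}"])
    show "Int_stable (range (\<lambda>(x,y). {x<..y::real}))" by (auto simp: Int_stable_def)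
    show "range (\<lambda>(x,y). {x<..y::real}) \<subseteq> Pow UNIV" by simp
    show "emeasure \<mu> X = emeasure S X" if "X \<in> range (\<lambda>(x,y). {x<..y::real})" for X
      using that ioc by auto
    show "sets \<mu> = sigma_sets UNIV (range (\<lambda>(x,y). {x<..y::real}))"
      using \<mu>1 borel_sigma_sets_Ioc by (metis sets_measure_of subset_UNIV Pow_UNIV)
    show "sets S = sigma_sets UNIV (range (\<lambda>(x,y). {x<..y::real}))"
      using S(1) borel_sigma_sets_Ioc by (metis sets_measure_of subset_UNIV Pow_UNIV)
    show "range (\<lambda>i. {- real i<..real i}) \<subseteq> range (\<lambda>(x,y). {x<..y::real})" by auto
    show "(\<Union>i. {- real i<..real i}) = UNIV"
    proof (intro set_eqI iffI)
      fix x :: real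
      obtain n where "\<bar>x\<bar> < real n" using reals_Archimedean2 by blast
      then show "x \<in> (\<Union>i. {- real i<..real i})" by (intro UN_I[of n]) auto
    qed auto
    show "emeasure \<mu> {- real i<..real i} \<noteq> \<infinity>" for i
      using emeasure_mono[of "{- real i<..real i}" UNIV \<mu>] \<mu>1 \<mu>4 by (auto simp: top_unique)
  qed
  have compK: "compact K"
    using Kclosed Ksub by (meson compact_Icc compact_imp_bounded bounded_subset compact_eq_bounded_closed)
  have Kb: "K \<in> sets borel" using Kclosed by simp
  have hK0: "emeasure (N m) K = 0" for m
  proof (cases "m \<in> M")
    case True
    have "compact (hm m ` K)"
      using compact_continuous_image[OF continuous_on_subset[OF cont[OF True] Ksub] compK] .
    then have "hm m ` K \<in> sets lborel" by (simp add: compact_imp_closed)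
    then have "hm m ` K \<in> null_sets lborel" using null[OF True] null_sets_completion_iff by blast
    then have "emeasure lborel (hm m ` K) = 0" by auto
    then show ?thesis using \<nu>[OF True] Kb Ksub by (auto simp: N_def P_def True)
  next
    case False then show ?thesis by (simp add: N_def)
  qed
  have "emeasure lborel (H ` K) = emeasure \<mu> K" using \<mu>2[OF Kb Ksub] by simp
  also have "\<dots> = 0" using eqm S(2)[OF Kb] hK0 by simp
  finally have HK0: "emeasure lborel (H ` K) = 0" .
  have "compact (H ` K)"
    using compact_continuous_image[OF continuous_on_subset[OF Hc Ksub] compK] .
  then have "H ` K \<in> sets lborel" by (simp add: compact_imp_closed)
  then have "H ` K \<in> null_sets lborel" using HK0 by (simp add: null_sets_def)
  then have HKn: "H ` K \<in> null_sets lebesgue" by (rule null_sets_completionI)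
  show ?thesis using Hc Hs Hb HKn unfolding H_def F_def by blast
qed
end
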